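(* For every fixed integer $k\ge1$, the asymptotic approximation ratio of $NFk$ for the $k$-times bin packing problem equals $2$; that is, $$\limsup_{N\to\infty}\ \sup\left\{\frac{NFk(D_k)}{OPT(D_k)}\ :\ D \text{ an instance with } OPT(D_k)\ge N\right\}=2.$$
   Context: Let $S>0$ be a bin capacity and $D=(x_1,\dots,x_n)$ a list of items with sizes in $(0,S]$. For $k\ge1$, $D_k$ is the sequence of $k$ consecutive copies of $D$: $x_1^1,\dots,x_n^1,\dots,x_1^k,\dots,x_n^k$. A $k$-times bin packing is an assignment of all elements of $D_k$ to bins so that each bin has total size at most $S$ and no bin contains two copies of the same item; $OPT(D_k)$ is the minimum number of bins. The algorithm $NFk$ processes $D_k$ in this order keeping a single open bin: if the current element fits into the open bin (total size stays at most $S$) and the open bin contains no copy of the same item, it is placed there; otherwise the open bin is closed forever and a new bin is opened containing the current element. $NFk(D_k)$ is the number of bins produced. *)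

theory Defs
  imports Complex_Main "HOL-Library.Extended_Real" "HOL-Library.Liminf_Limsup"
begin

text \<open>An instance is a list D of item sizes (item j has size D!j); it is valid for
capacity S if every size lies in (0,S]. The elements of D_k are the pairs (j,c)
with j < length D (item index) and c < k (copy index).\<close>

definition valid_instance :: "real \<Rightarrow> real list \<Rightarrow> bool" where
  "valid_instance S D \<longleftrightarrow> (\<forall>x\<in>set D. 0 < x \<and> x \<le> S)"

definition elems_k :: "real list \<Rightarrow> nat \<Rightarrow> (nat \<times> nat) set" where
  "elems_k D k = {..<length D} \<times> {..<k}"

definition k_packing :: "real \<Rightarrow> real list \<Rightarrow> nat \<Rightarrow> (nat \<times> nat \<Rightarrow> nat) \<Rightarrow> bool" where
  "k_packing S D k b \<longleftrightarrow>
     (\<forall>i. (\<Sum>e\<in>{e\<in>elems_k D k. b e = i}. D ! fst e) \<le> S) \<and>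
     (\<forall>e\<in>elems_k D k. \<forall>e'\<in>elems_k D k. e \<noteq> e' \<and> fst e = fst e' \<longrightarrow> b e \<noteq> b e')"

definition OPT :: "real \<Rightarrow> real list \<Rightarrow> nat \<Rightarrow> nat" where
  "OPT S D k = (LEAST m. \<exists>b. k_packing S D k b \<and> b ` elems_k D k \<subseteq> {..<m})"

text \<open>Next Fit for k-times bin packing. State: (number of bins opened so far,
items in the open bin, load of the open bin). With 0 bins opened there is no
open bin.\<close>

definition nf_step :: "real \<Rightarrow> real list \<Rightarrow> nat \<times> nat list \<times> real \<Rightarrow> nat \<Rightarrow> nat \<times> nat list \<times> real" where
  "nf_step S D st j = (case st of (cnt, its, load) \<Rightarrow>
     if 0 < cnt \<and> load + D ! j \<le> S \<and> j \<notin> set its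
     then (cnt, j # its, load + D ! j)
     else (cnt + 1, [j], D ! j))"

definition NFk :: "real \<Rightarrow> real list \<Rightarrow> nat \<Rightarrow> nat" where
  "NFk S D k = fst (foldl (nf_step S D) (0, [], 0) (concat (replicate k [0..<length D])))"

end

theory Submission
  imports Defs
begin


lemma seq_eq: "concat (replicate k [0..<n]) = map (\<lambda>s. s mod n) [0..<k*n]"
proof (induction k)
  case 0 then show ?case by simp
next
  case (Suc k)
  have "[0..<Suc k * n] = [0..<n] @ [n..<n + k*n]"
    by (simp add: upt_add_eq_append[of 0 n "k*n", simplified])
  moreover have "[n..<n + k*n] = map (\<lambda>i. i + n) [0..<k*n]"
    by (simp add: map_add_upt add.commute)
  moreover have "map (\<lambda>s. s mod n) [0..<n] = [0..<n]"
    by (rule map_idI) simp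
  ultimately show ?case using Suc by (simp add: comp_def)
qed

lemma NFk_alt: "NFk S D k = fst (foldl (nf_step S D) (0, [], 0) (map (\<lambda>s. s mod length D) [0..<k * length D]))"
  unfolding NFk_def seq_eq ..

lemma foldl_upt_Suc: "foldl f s (map g [0..<Suc t]) = f (foldl f s (map g [0..<t])) (g t)"
  by simp

lemma consec_sum: fixes a n :: nat shows "(\<Sum>s\<in>{a..<a+n}. f (s mod n)) = (\<Sum>i<n. (f i :: real))"
proof (induction a)
  case 0 then show ?case by (simp add: atLeast0LessThan)
next
  case (Suc a)
  have "(\<Sum>s\<in>{a..<Suc (a+n)}. f (s mod n)) = f (a mod n) + (\<Sum>s\<in>{Suc a..<Suc a+n}. f (s mod n))"
    by (subst sum.atLeast_Suc_lessThan) auto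
  moreover have "(\<Sum>s\<in>{a..<Suc (a+n)}. f (s mod n)) = (\<Sum>s\<in>{a..<a+n}. f (s mod n)) + f ((a+n) mod n)"
    by (subst sum.atLeastLessThan_Suc) auto
  ultimately show ?case using Suc by simp
qed

lemma mult_sum: fixes k n :: nat shows "(\<Sum>s<k*n. f (s mod n)) = real k * (\<Sum>i<n. (f i :: real))"
proof (induction k)
  case 0 then show ?case by simp
next
  case (Suc k)
  have "(\<Sum>s<Suc k*n. f (s mod n)) = (\<Sum>s\<in>{0..<k*n}. f (s mod n)) + (\<Sum>s\<in>{k*n..<k*n+n}. f (s mod n))"
    by (subst sum.atLeastLessThan_concat) (auto simp: atLeast0LessThan add.commute)
  moreover have "(\<Sum>s\<in>{k*n..<k*n+n}. f (s mod n)) = (\<Sum>i<n. f i)" by (rule consec_sum)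
  ultimately show ?case using Suc by (simp add: atLeast0LessThan algebra_simps)
qed

lemma packing_exists:
  assumes "valid_instance S D" "0 \<le> S"
  shows "\<exists>b. k_packing S D k b \<and> b ` elems_k D k \<subseteq> {..<length D * k}"
proof -
  define b where "b = (\<lambda>e::nat\<times>nat. fst e * k + snd e)"
  have img: "b ` elems_k D k \<subseteq> {..<length D * k}"
  proof
    fix x assume "x \<in> b ` elems_k D k"
    then obtain j c where "j < length D" "c < k" "x = j*k + c" by (auto simp: b_def elems_k_def)
    then have "x < (j+1)*k" by simp
    also have "\<dots> \<le> length D * k" using \<open>j < length D\<close> by (intro mult_right_mono) auto
    finally show "x \<in> {..<length D * k}" by simp
  qed
  have inj: "inj_on b (elems_k D k)"
  proof (rule inj_onI)
    fix x y assume "x \<in> elems_k D k" "y \<in> elems_k D k" "b x = b y"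
    then obtain j c j' c' where xy: "x = (j,c)" "y = (j',c')" "c < k" "c' < k" "j*k+c = j'*k+c'"
      by (cases x; cases y) (auto simp: b_def elems_k_def)
    then have "(j*k+c) mod k = (j'*k+c') mod k" "(j*k+c) div k = (j'*k+c') div k" by simp_all
    then have "c = c'" "j = j'" using xy(3,4) by simp_all
    then show "x = y" using xy by simp
  qed
  have "(\<Sum>e\<in>{e\<in>elems_k D k. b e = i}. D ! fst e) \<le> S" for i
  proof -
    let ?A = "{e\<in>elems_k D k. b e = i}"
    have fin: "finite ?A" by (auto simp: elems_k_def)
    have c1: "card ?A \<le> 1"
      using inj unfolding One_nat_def card_le_Suc0_iff_eq[OF fin] by (auto dest: inj_onD)
    have "\<forall>e\<in>?A. D ! fst e \<le> S" using assms by (auto simp: elems_k_def valid_instance_def)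
    then have "(\<Sum>e\<in>?A. D ! fst e) \<le> real (card ?A) * S" by (intro sum_bounded_above) auto
    also have "\<dots> \<le> 1 * S" using c1 assms
      by (intro mult_right_mono) (auto simp: valid_instance_def)
    finally show ?thesis
      using c1 by (cases "card ?A = 0") auto
  qed
  moreover have "\<forall>e\<in>elems_k D k. \<forall>e'\<in>elems_k D k. e \<noteq> e' \<and> fst e = fst e' \<longrightarrow> b e \<noteq> b e'"
    using inj by (auto dest: inj_onD)
  ultimately show ?thesis using img unfolding k_packing_def by blast
qed



lemma OPT_spec:
  assumes "valid_instance S D" "0 \<le> S"
  shows "\<exists>b. k_packing S D k b \<and> b ` elems_k D k \<subseteq> {..<OPT S D k}"
  unfolding OPT_def by (rule LeastI_ex) (use packing_exists[OF assms] in blast)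

lemma OPT_le:
  assumes "k_packing S D k b" "b ` elems_k D k \<subseteq> {..<M}"
  shows "OPT S D k \<le> M"
  unfolding OPT_def by (rule Least_le) (use assms in blast)

lemma total_elems: "(\<Sum>e\<in>elems_k D k. D ! fst e) = real k * (\<Sum>j<length D. D ! j)"
proof -
  have "(\<Sum>e\<in>{..<length D} \<times> {..<k}. D ! fst e) = (\<Sum>j<length D. \<Sum>c<k. D ! fst (j,c))"
    by (rule sum.cartesian_product')
  then show ?thesis unfolding elems_k_def by (simp add: sum_distrib_left mult.commute)
qed

lemma packing_sum:
  assumes "k_packing S D k b" "b ` elems_k D k \<subseteq> {..<M}"
  shows "(\<Sum>e\<in>elems_k D k. D ! fst e) \<le> real M * S"
proof -
  have fin: "finite (elems_k D k)" by (simp add: elems_k_def)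
  have "(\<Sum>e\<in>elems_k D k. D ! fst e) = (\<Sum>i<M. \<Sum>e\<in>{e\<in>elems_k D k. b e = i}. D ! fst e)"
    by (rule sum.group[symmetric]) (use fin assms(2) in auto)
  also have "\<dots> \<le> (\<Sum>i<M. S)"
    using assms(1) by (intro sum_mono) (auto simp: k_packing_def)
  finally show ?thesis by simp
qed

lemma packing_k:
  assumes "k_packing S D k b" "b ` elems_k D k \<subseteq> {..<M}" "length D \<ge> 1"
  shows "k \<le> M"
proof -
  have "inj_on (\<lambda>c. b (0, c)) {..<k}"
  proof (rule inj_onI)
    fix c c' assume "c \<in> {..<k}" "c' \<in> {..<k}" "b (0, c) = b (0, c')"
    then show "c = c'" using assms(1,3) unfolding k_packing_def elems_k_def by force
  qed
  moreover have "(\<lambda>c. b (0, c)) ` {..<k} \<subseteq> {..<M}"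
  proof
    fix x assume "x \<in> (\<lambda>c. b (0, c)) ` {..<k}"
    then obtain c where "c < k" "x = b (0,c)" by auto
    then have "(0,c) \<in> elems_k D k" using assms(3) by (auto simp: elems_k_def)
    then show "x \<in> {..<M}" using assms(2) \<open>x = b (0,c)\<close> by blast
  qed
  ultimately have "card {..<k} \<le> card {..<M}" by (intro card_inj_on_le) auto
  then show ?thesis by simp
qed



lemma pos_item: "valid_instance S D \<Longrightarrow> length D \<ge> 1 \<Longrightarrow> 0 < D ! (s mod length D)"
  unfolding valid_instance_def by (meson nth_mem less_le_trans mod_less_divisor zero_less_one)

lemma F1:
  fixes n t r :: nat
  assumes "r \<le> n" "r \<le> t" "n \<ge> 1"
  shows "(t mod n \<in> set (map (\<lambda>s. s mod n) (rev [t-r..<t]))) \<longleftrightarrow> r = n"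
proof
  assume "t mod n \<in> set (map (\<lambda>s. s mod n) (rev [t-r..<t]))"
  then obtain s where s: "t - r \<le> s" "s < t" "s mod n = t mod n" by auto
  then have "n dvd (t - s)" using mod_eq_dvd_iff_nat[of s t n] by simp
  moreover have "t - s > 0" using s by simp
  ultimately have "n \<le> t - s" by (simp add: dvd_imp_le)
  then show "r = n" using s assms by linarith
next
  assume "r = n"
  then have "t - r \<in> set [t-r..<t]" "(t - r) mod n = t mod n" using assms
    by (auto simp: le_mod_geq)
  then show "t mod n \<in> set (map (\<lambda>s. s mod n) (rev [t-r..<t]))"
    unfolding set_map set_rev by (metis image_eqI)
qed

lemma F2:
  fixes n t :: nat
  assumes "n \<le> t"
  shows "(\<Sum>s\<in>{t-n..<t}. f (s mod n)) = (\<Sum>i<n. (f i :: real))"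
  using consec_sum[where a="t-n" and n=n and f=f] assms by simp

lemma F3:
  assumes "valid_instance S D" "length D \<ge> 1" "r < length D" "r \<le> t"
  shows "(\<Sum>s\<in>{t-r..<Suc t}. D ! (s mod length D)) \<le> (\<Sum>j<length D. D ! j)"
proof -
  let ?n = "length D"
  have "(\<Sum>s\<in>{t-r..<Suc t}. D ! (s mod ?n)) \<le> (\<Sum>s\<in>{t-r..<t-r+?n}. D ! (s mod ?n))"
    using assms pos_item[OF assms(1,2)] by (intro sum_mono2) (auto intro: less_imp_le)
  also have "\<dots> = (\<Sum>j<?n. D ! j)" by (rule consec_sum)
  finally show ?thesis .
qed

definition "stt S D t = foldl (nf_step S D) (0, [], 0) (map (\<lambda>s. s mod length D) [0..<t])"

lemma nf_inv:
  assumes val: "valid_instance S D" and S: "S > 0" and n1: "length D \<ge> 1" and t1: "t \<ge> 1"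
  shows "\<exists>cnt r. stt S D t = (cnt, map (\<lambda>s. s mod length D) (rev [t-r..<t]),
            \<Sum>s\<in>{t-r..<t}. D ! (s mod length D))
         \<and> 1 \<le> cnt \<and> 1 \<le> r \<and> r \<le> length D \<and> r \<le> t
         \<and> ((\<Sum>j<length D. D ! j) > S \<longrightarrow> S * (real cnt - 1) \<le> 2 * (\<Sum>s<t. D ! (s mod length D)) - (\<Sum>s\<in>{t-r..<t}. D ! (s mod length D)))
         \<and> ((\<Sum>j<length D. D ! j) \<le> S \<longrightarrow> (cnt - 1) * length D + r = t)"
  using t1
proof (induction t rule: nat_induct_at_least)
  case base
  have "stt S D 1 = (1, [0], D ! 0)" using n1 S
    by (simp add: stt_def nf_step_def)
  moreover have "0 < D ! 0" using pos_item[OF val n1, of 0] n1 by simp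
  ultimately show ?case
    using n1 by (intro exI[of _ 1]) auto
next
  case (Suc t)
  let ?n = "length D"
  let ?\<sigma> = "\<Sum>j<length D. D ! j"
  let ?x = "D ! (t mod ?n)"
  let ?T = "\<Sum>s<t. D ! (s mod ?n)"
  from Suc.IH obtain cnt r where st: "stt S D t = (cnt, map (\<lambda>s. s mod ?n) (rev [t-r..<t]),
            \<Sum>s\<in>{t-r..<t}. D ! (s mod ?n))"
     and c1: "1 \<le> cnt" and r1: "1 \<le> r" and rn: "r \<le> ?n" and rt: "r \<le> t"
     and I2: "?\<sigma> > S \<longrightarrow> S * (real cnt - 1) \<le> 2 * ?T - (\<Sum>s\<in>{t-r..<t}. D ! (s mod ?n))"
     and I3: "?\<sigma> \<le> S \<longrightarrow> (cnt - 1) * ?n + r = t" by blast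
  let ?its = "map (\<lambda>s. s mod ?n) (rev [t-r..<t])"
  let ?L = "\<Sum>s\<in>{t-r..<t}. D ! (s mod ?n)"
  have stS: "stt S D (Suc t) = nf_step S D (stt S D t) (t mod ?n)"
    by (simp add: stt_def)
  have TS: "(\<Sum>s<Suc t. D ! (s mod ?n)) = ?T + ?x" by simp
  have xpos: "0 < ?x" by (rule pos_item[OF val n1])
  have LS: "(\<Sum>s\<in>{Suc t - Suc r..<Suc t}. D ! (s mod ?n)) = ?L + ?x"
    using rt by (subst sum.atLeastLessThan_Suc) auto
  have L0: "0 \<le> ?L" using pos_item[OF val n1] by (intro sum_nonneg) (simp add: less_imp_le)
  have memiff: "(t mod ?n \<in> set ?its) \<longleftrightarrow> r = ?n" by (rule F1[OF rn rt n1])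
  show ?case
  proof (cases "0 < cnt \<and> ?L + ?x \<le> S \<and> t mod ?n \<notin> set ?its")
    case True
    then have rlt: "r < ?n" using memiff rn by auto
    have u: "[t-r..<Suc t] = [t-r..<t] @ [t]" using rt by (simp only: upt_Suc if_True diff_le_self)
    have its': "t mod ?n # ?its = map (\<lambda>s. s mod ?n) (rev [Suc t - Suc r..<Suc t])"
      unfolding diff_Suc_Suc u by simp
    have sttS: "stt S D (Suc t) = (cnt, map (\<lambda>s. s mod ?n) (rev [Suc t - Suc r..<Suc t]),
            \<Sum>s\<in>{Suc t - Suc r..<Suc t}. D ! (s mod ?n))"
    proof -
      have "stt S D (Suc t) = (cnt, t mod ?n # ?its, ?L + ?x)"
        using True st stS by (simp add: nf_step_def)
      then show ?thesis unfolding its' LS .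
    qed
    have A2: "?\<sigma> > S \<longrightarrow> S*(real cnt - 1) \<le> 2*(?T + ?x) - (?L + ?x)" using I2 xpos by auto
    have A3: "?\<sigma> \<le> S \<longrightarrow> (cnt-1)*?n + Suc r = Suc t" using I3 by auto
    have B: "1 \<le> Suc r" "Suc r \<le> ?n" "Suc r \<le> Suc t" using rlt rt by auto
    show ?thesis
      apply (rule exI[of _ cnt], rule exI[of _ "Suc r"])
      apply (simp only: TS LS)
      using sttS[unfolded LS] c1 A2 A3 B by blast
  next
    case False
    have its': "[t mod ?n] = map (\<lambda>s. s mod ?n) (rev [Suc t - 1..<Suc t])" by simp
    have L1: "(\<Sum>s\<in>{Suc t - 1..<Suc t}. D ! (s mod ?n)) = ?x" by simp
    have sttS: "stt S D (Suc t) = (Suc cnt, map (\<lambda>s. s mod ?n) (rev [Suc t - 1..<Suc t]),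
            \<Sum>s\<in>{Suc t - 1..<Suc t}. D ! (s mod ?n))"
    proof -
      have sttS: "stt S D (Suc t) = (Suc cnt, [t mod ?n], ?x)"
        using False st stS by (simp add: nf_step_def)
      then show ?thesis unfolding its' L1 .
    qed
    have A2: "?\<sigma> > S \<longrightarrow> S * (real (Suc cnt) - 1) \<le> 2 * (?T + ?x) - ?x"
    proof
      assume gt: "?\<sigma> > S"
      have "?L + ?x > S"
      proof (rule ccontr)
        assume "\<not> ?L + ?x > S"
        then have "t mod ?n \<in> set ?its" using False c1 by auto
        then have "r = ?n" using memiff by simp
        then have "?L = ?\<sigma>" using rt F2[of ?n t "\<lambda>i. D ! i"] by simp
        then show False using gt xpos \<open>\<not> ?L + ?x > S\<close> by simp
      qed
      then show "S * (real (Suc cnt) - 1) \<le> 2 * (?T + ?x) - ?x" using I2 gt by (simp add: algebra_simps)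
    qed
    have A3: "?\<sigma> \<le> S \<longrightarrow> (Suc cnt - 1) * ?n + 1 = Suc t"
    proof
      assume le: "?\<sigma> \<le> S"
      have "r = ?n"
      proof (rule ccontr)
        assume "r \<noteq> ?n"
        then have "r < ?n" using rn by simp
        then have "?L + ?x \<le> ?\<sigma>" using F3[OF val n1 _ rt] LS by simp
        then show False using False le c1 memiff \<open>r \<noteq> ?n\<close> by auto
      qed
      then show "(Suc cnt - 1) * ?n + 1 = Suc t" using I3 le c1
        by (cases cnt) (auto simp: algebra_simps)
    qed
    have B: "1 \<le> Suc cnt" "(1::nat) \<le> 1" "1 \<le> ?n" "1 \<le> Suc t" using n1 by auto
    show ?thesis
      apply (rule exI[of _ "Suc cnt"], rule exI[of _ 1])
      apply (simp only: TS L1)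
      using sttS[unfolded L1] A2 A3 B by blast
  qed
qed



lemma NF_upper:
  assumes val: "valid_instance S D" and S: "S > 0" and k1: "k \<ge> 1"
  shows "NFk S D k \<le> 2 * OPT S D k + 1"
proof (cases "length D = 0")
  case True
  then show ?thesis by (simp add: NFk_def)
next
  case False
  then have n1: "length D \<ge> 1" by (simp add: Suc_le_eq)
  let ?n = "length D"
  let ?\<sigma> = "\<Sum>j<length D. D ! j"
  have kn: "k * ?n \<ge> 1" using n1 k1 by simp
  have NF: "NFk S D k = fst (stt S D (k * ?n))" by (simp add: NFk_alt stt_def)
  obtain cnt r where st: "stt S D (k * ?n) = (cnt, map (\<lambda>s. s mod ?n) (rev [k * ?n-r..<k * ?n]),
            \<Sum>s\<in>{k * ?n-r..<k * ?n}. D ! (s mod ?n))"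
     and c1: "1 \<le> cnt" and r1: "1 \<le> r" and rn: "r \<le> ?n"
     and I2: "?\<sigma> > S \<longrightarrow> S * (real cnt - 1) \<le> 2 * (\<Sum>s<k * ?n. D ! (s mod ?n)) - (\<Sum>s\<in>{k * ?n-r..<k * ?n}. D ! (s mod ?n))"
     and I3: "?\<sigma> \<le> S \<longrightarrow> (cnt - 1) * ?n + r = k * ?n"
    using nf_inv[OF val S n1 kn] by blast
  have NFc: "NFk S D k = cnt" using NF st by simp
  obtain b where b: "k_packing S D k b" "b ` elems_k D k \<subseteq> {..<OPT S D k}"
    using OPT_spec[OF val] S by fastforce
  have tot: "real k * ?\<sigma> \<le> real (OPT S D k) * S"
    using packing_sum[OF b] total_elems[of D k] by simp
  have kO: "k \<le> OPT S D k" by (rule packing_k[OF b n1])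
  have T: "(\<Sum>s<k * ?n. D ! (s mod ?n)) = real k * ?\<sigma>" by (rule mult_sum)
  have L0: "0 \<le> (\<Sum>s\<in>{k * ?n-r..<k * ?n}. D ! (s mod ?n))"
    using pos_item[OF val n1] by (intro sum_nonneg) (simp add: less_imp_le)
  show ?thesis
  proof (cases "?\<sigma> > S")
    case True
    have "S * (real cnt - 1) \<le> S * (2 * real (OPT S D k))"
      using I2 True T L0 tot by (simp add: algebra_simps)
    then have "real cnt - 1 \<le> 2 * real (OPT S D k)" using S by simp
    then show ?thesis using NFc by linarith
  next
    case False
    have "(cnt - 1) * ?n < k * ?n" using I3 False r1 by linarith
    then have "cnt - 1 < k" using mult_less_cancel2 by blast
    then show ?thesis using NFc kO by linarith
  qed
qed



definition inst :: "real \<Rightarrow> nat \<Rightarrow> real list" where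
  "inst S p = map (\<lambda>j. if even j then S/2 else S/(2*p)) [0..<4*p]"

lemma inst_len: "length (inst S p) = 4*p" by (simp add: inst_def)

lemma inst_nth: "j < 4*p \<Longrightarrow> inst S p ! j = (if even j then S/2 else S/(2*p))"
  by (simp add: inst_def)

lemma inst_valid: assumes "S > 0" "p \<ge> 1" shows "valid_instance S (inst S p)"
proof -
  have a: "S/(2*real p) \<le> S" using assms by (simp add: field_simps)
  have b: "0 < S/(2*real p)" using assms by simp
  show ?thesis using assms a b unfolding valid_instance_def inst_def by auto
qed

lemma alt_sum: "(\<Sum>j<2*m. if even j then a else (b::real)) = real m * (a + b)"
  by (induction m) (auto simp: algebra_simps)

lemma inst_sum: "p \<ge> 1 \<Longrightarrow> (\<Sum>j<length (inst S p). inst S p ! j) = real (p+1) * S"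
proof -
  assume p: "p \<ge> 1"
  have "(\<Sum>j<length (inst S p). inst S p ! j) = (\<Sum>j<2*(2*p). if even j then S/2 else S/(2*p))"
    by (simp add: inst_len inst_nth)
  also have "\<dots> = real (2*p) * (S/2 + S/(2*p))" by (rule alt_sum)
  also have "\<dots> = real (p+1) * S" using p by (simp add: field_simps)
  finally show ?thesis .
qed

lemma even_mod4: "even ((t::nat) mod (4*p)) = even t"
  by (metis dvd_mod_iff dvd_mult2 even_numeral)

lemma inst_item: "p \<ge> 1 \<Longrightarrow> inst S p ! (t mod (4*p)) = (if even t then S/2 else S/(2*p))"
  by (subst inst_nth) (auto simp: even_mod4)

lemma inst_stt:
  assumes S: "S > 0" and p: "p \<ge> 1"
  shows "(t = 0 \<longrightarrow> stt S (inst S p) t = (0,[],0)) \<and>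
         (odd t \<longrightarrow> stt S (inst S p) t = ((t+1) div 2, [(t-1) mod (4*p)], S/2)) \<and>
         (even t \<and> t > 0 \<longrightarrow> fst (stt S (inst S p) t) = t div 2 \<and> snd (snd (stt S (inst S p) t)) = S/2 + S/(2*p))"
proof (induction t)
  case 0 then show ?case by (simp add: stt_def)
next
  case (Suc t)
  let ?D = "inst S p"
  let ?n = "4*p"
  have stS: "stt S ?D (Suc t) = nf_step S ?D (stt S ?D t) (t mod ?n)"
    by (simp add: stt_def inst_len)
  have e0: "0 < S/(2*p)" using S p by simp
  have e1: "S/2 + S/(2*p) \<le> S" using S p by (simp add: field_simps)
  show ?case
  proof (cases "t = 0")
    case True
    then have "stt S ?D (Suc t) = (1, [0], S/2)" using stS Suc.IH p inst_item[OF p, of S 0]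
      by (simp add: nf_step_def)
    then show ?thesis using True by simp
  next
    case t0: False
    show ?thesis
    proof (cases "odd t")
      case True
      then have st: "stt S ?D t = ((t+1) div 2, [(t-1) mod ?n], S/2)" using Suc.IH by simp
      have c: "0 < (t+1) div 2" using True by (cases t) auto
      have ne: "t mod ?n \<noteq> (t-1) mod ?n"
      proof
        assume "t mod ?n = (t-1) mod ?n"
        then have "even (t mod ?n) = even ((t-1) mod ?n)" by simp
        then show False using True t0 by (simp add: even_mod4)
      qed
      have "stt S ?D (Suc t) = ((t+1) div 2, [t mod ?n, (t-1) mod ?n], S/2 + S/(2*p))"
        using stS st c ne e1 inst_item[OF p, of S t] True by (simp add: nf_step_def)
      then show ?thesis using True by simp
    next
      case False
      have h: "fst (stt S ?D t) = t div 2" "snd (snd (stt S ?D t)) = S/2 + S/(2*p)"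
        using Suc.IH t0 False by auto
      obtain its where st: "stt S ?D t = (t div 2, its, S/2 + S/(2*p))"
        by (intro that[of "fst (snd (stt S ?D t))"]) (metis h prod.collapse)
      have "\<not> S/2 + S/(2*p) + S/2 \<le> S" using e0 by simp
      then have "stt S ?D (Suc t) = (t div 2 + 1, [t mod ?n], S/2)"
        using stS st inst_item[OF p, of S t] False by (simp add: nf_step_def)
      then show ?thesis using False t0 by (auto elim!: evenE)
    qed
  qed
qed

lemma inst_NF:
  assumes S: "S > 0" and p: "p \<ge> 1" and k: "k \<ge> 1"
  shows "NFk S (inst S p) k = 2*p*k"
proof -
  have "NFk S (inst S p) k = fst (stt S (inst S p) (k*(4*p)))"
    by (simp add: NFk_alt stt_def inst_len)
  also have "\<dots> = k*(4*p) div 2" using inst_stt[OF S p, of "k*(4*p)"] k p by simp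
  finally show ?thesis by simp
qed



lemma sum_card_bound:
  assumes "finite A" "\<And>e. e \<in> A \<Longrightarrow> f e \<le> (B::real)" "card A \<le> m" "0 \<le> B"
  shows "sum f A \<le> real m * B"
proof -
  have "sum f A \<le> real (card A) * B" using assms(2) by (intro sum_bounded_above) auto
  also have "\<dots> \<le> real m * B" using assms(3,4) by (intro mult_right_mono) auto
  finally show ?thesis .
qed

lemma inst_packing:
  assumes S: "S > 0" and p: "p \<ge> 1"
  shows "\<exists>b. k_packing S (inst S p) k b \<and> b ` elems_k (inst S p) k \<subseteq> {..<k*p + k}"
proof -
  let ?D = "inst S p"
  define b where "b = (\<lambda>e::nat\<times>nat. if even (fst e) then snd e * p + fst e div 4 else k*p + snd e)"
  have el: "elems_k ?D k = {..<4*p} \<times> {..<k}" by (simp add: elems_k_def inst_len)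
  have img: "b ` elems_k ?D k \<subseteq> {..<k*p + k}"
  proof
    fix x assume "x \<in> b ` elems_k ?D k"
    then obtain j c where jc: "j < 4*p" "c < k" "x = b (j,c)" by (auto simp: el)
    show "x \<in> {..<k*p + k}"
    proof (cases "even j")
      case True
      have "j div 4 < p" using jc by auto
      then have "c*p + j div 4 < (c+1)*p" by simp
      also have "\<dots> \<le> k*p" using jc by (intro mult_right_mono) auto
      finally show ?thesis using jc True by (simp add: b_def)
    next
      case False then show ?thesis using jc by (simp add: b_def)
    qed
  qed
  have dist: "\<forall>e\<in>elems_k ?D k. \<forall>e'\<in>elems_k ?D k. e \<noteq> e' \<and> fst e = fst e' \<longrightarrow> b e \<noteq> b e'"
    using p by (auto simp: b_def el)
  have fin: "finite {e\<in>elems_k ?D k. b e = i}" for i by (simp add: el)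
  have bins: "(\<Sum>e\<in>{e\<in>elems_k ?D k. b e = i}. ?D ! fst e) \<le> S" for i
  proof (cases "i < k*p")
    case True
    let ?A = "{e\<in>elems_k ?D k. b e = i}"
    have sub: "?A \<subseteq> {(4*(i mod p), i div p), (4*(i mod p)+2, i div p)}"
    proof
      fix e assume e: "e \<in> ?A"
      then obtain j c where jc: "e = (j,c)" "j < 4*p" "c < k" "b (j,c) = i" by (auto simp: el)
      have ev: "even j" using jc True by (auto simp: b_def split: if_splits)
      then have bi: "c*p + j div 4 = i" using jc by (simp add: b_def)
      have q: "j div 4 < p" using jc by auto
      have "i div p = c" using bi q p by (metis add.commute div_mult_self3 div_less not_one_le_zero add_0 gr_zeroI)
      moreover have "i mod p = j div 4" using bi q by (metis add.commute mod_mult_self3 mod_less)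
      moreover have "j = 4*(j div 4) \<or> j = 4*(j div 4) + 2" using ev by presburger
      ultimately show "e \<in> {(4*(i mod p), i div p), (4*(i mod p)+2, i div p)}" using jc by auto
    qed
    have card: "card ?A \<le> 2"
      by (rule order.trans[OF card_mono[OF _ sub]]) (auto simp: card_insert_le_m1)
    have "(\<Sum>e\<in>?A. ?D ! fst e) \<le> real 2 * (S/2)"
    proof (rule sum_card_bound[OF fin _ card])
      fix e assume e: "e \<in> ?A"
      then obtain j c where jc: "e = (j,c)" "j < 4*p" "c < k" "b (j,c) = i" by (auto simp: el)
      have ev: "even j" using jc True by (auto simp: b_def split: if_splits)
      show "?D ! fst e \<le> S/2" using jc ev by (simp add: inst_nth)
    qed (use S in simp)
    then show ?thesis by simp
  next
    case False
    let ?A = "{e\<in>elems_k ?D k. b e = i}"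
    have sub: "?A \<subseteq> (\<lambda>q. (2*q+1, i - k*p)) ` {..<2*p}"
    proof
      fix e assume e: "e \<in> ?A"
      then obtain j c where jc: "e = (j,c)" "j < 4*p" "c < k" "b (j,c) = i" by (auto simp: el)
      have od: "odd j"
      proof
        assume ev: "even j"
        then have "i = c*p + j div 4" using jc by (simp add: b_def)
        moreover have "c*p + j div 4 < (c+1)*p" using jc by simp
        moreover have "(c+1)*p \<le> k*p" using jc by (intro mult_right_mono) auto
        ultimately show False using False by linarith
      qed
      then have "c = i - k*p" using jc by (simp add: b_def)
      moreover have "j = 2*(j div 2) + 1" "j div 2 < 2*p" using od jc by presburger+
      ultimately show "e \<in> (\<lambda>q. (2*q+1, i - k*p)) ` {..<2*p}" using jc
        by (intro image_eqI[of _ _ "j div 2"]) auto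
    qed
    have card: "card ?A \<le> 2*p"
      by (rule order.trans[OF card_mono[OF _ sub]]) (auto intro: order.trans[OF card_image_le])
    have "(\<Sum>e\<in>?A. ?D ! fst e) \<le> real (2*p) * (S/(2*p))"
    proof (rule sum_card_bound[OF fin _ card])
      fix e assume e: "e \<in> ?A"
      then obtain j c where jc: "e = (j,c)" "j < 4*p" "c < k" "b (j,c) = i" by (auto simp: el)
      have od: "odd j"
      proof
        assume ev: "even j"
        then have "i = c*p + j div 4" using jc by (simp add: b_def)
        moreover have "c*p + j div 4 < (c+1)*p" using jc by simp
        moreover have "(c+1)*p \<le> k*p" using jc by (intro mult_right_mono) auto
        ultimately show False using False by linarith
      qed
      show "?D ! fst e \<le> S/(2*p)" using jc od by (simp add: inst_nth)
    qed (use S in simp)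
    then show ?thesis using p by simp
  qed
  show ?thesis unfolding k_packing_def using img dist bins by blast
qed

lemma inst_OPT:
  assumes S: "S > 0" and p: "p \<ge> 1"
  shows "OPT S (inst S p) k = k*(p+1)"
proof (rule antisym)
  obtain b where "k_packing S (inst S p) k b" "b ` elems_k (inst S p) k \<subseteq> {..<k*p + k}"
    using inst_packing[OF S p] by blast
  then have "OPT S (inst S p) k \<le> k*p + k" by (rule OPT_le)
  then show "OPT S (inst S p) k \<le> k*(p+1)" by (simp add: algebra_simps)
next
  obtain b where b: "k_packing S (inst S p) k b" "b ` elems_k (inst S p) k \<subseteq> {..<OPT S (inst S p) k}"
    using OPT_spec[OF inst_valid[OF S p]] S by fastforce
  have "real k * (real (p+1) * S) \<le> real (OPT S (inst S p) k) * S"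
    using packing_sum[OF b] total_elems[of "inst S p" k] inst_sum[OF p, of S] by simp
  then have "real (k*(p+1)) * S \<le> real (OPT S (inst S p) k) * S" by (simp add: algebra_simps)
  then have "real (k*(p+1)) \<le> real (OPT S (inst S p) k)" using S by simp
  then show "k*(p+1) \<le> OPT S (inst S p) k" by linarith
qed



lemma ratio_upper:
  assumes S: "S > 0" and k: "k \<ge> 1" and val: "valid_instance S D" and N: "N \<ge> 1" "N \<le> OPT S D k"
  shows "real (NFk S D k) / real (OPT S D k) \<le> 2 + 1 / real N"
proof -
  let ?O = "real (OPT S D k)"
  have O: "?O \<ge> real N" "real N \<ge> 1" using N by auto
  have "real (NFk S D k) \<le> 2 * ?O + 1" using NF_upper[OF val S k] by linarith
  then have "real (NFk S D k) / ?O \<le> (2 * ?O + 1) / ?O" using O by (intro divide_right_mono) auto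
  also have "\<dots> = 2 + 1 / ?O" using O by (simp add: field_simps)
  also have "\<dots> \<le> 2 + 1 / real N" using O by (simp add: frac_le)
  finally show ?thesis .
qed

lemma lim_ratio: "(\<lambda>p. ereal (2 * (real p / real (Suc p)))) \<longlonglongrightarrow> 2"
proof -
  have "(\<lambda>p. 2 * (real p / real (Suc p))) \<longlonglongrightarrow> 2 * 1"
    by (intro tendsto_mult tendsto_const LIMSEQ_n_over_Suc_n)
  then show ?thesis by (simp add: lim_ereal)
qed

theorem theorem3:
  fixes S :: real and k :: nat
  assumes "S > 0" and "k \<ge> 1"
  shows "limsup (\<lambda>N::nat. SUP D\<in>{D. valid_instance S D \<and> N \<le> OPT S D k}.
            ereal (real (NFk S D k) / real (OPT S D k))) = 2"
proof -
  define f where "f = (\<lambda>N::nat. SUP D\<in>{D. valid_instance S D \<and> N \<le> OPT S D k}.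
            ereal (real (NFk S D k) / real (OPT S D k)))"
  have up: "f N \<le> ereal (2 + 1 / real N)" if N: "N \<ge> 1" for N
    unfolding f_def using ratio_upper[OF assms _ N] by (intro SUP_least) auto
  have low: "2 \<le> f N" for N
  proof -
    have "ereal (2 * (real p / real (Suc p))) \<le> f N" if p: "p \<ge> max 1 N" for p
    proof -
      have p1: "p \<ge> 1" using p by simp
      have O: "OPT S (inst S p) k = k*(p+1)" by (rule inst_OPT[OF assms(1) p1])
      have "N \<le> k*(p+1)" using p assms(2) by (metis le_trans max.bounded_iff le_add1 mult_le_mono1 mult_1)
      then have mem: "inst S p \<in> {D. valid_instance S D \<and> N \<le> OPT S D k}"
        using inst_valid[OF assms(1) p1] O by simp
      have "real (NFk S (inst S p) k) / real (OPT S (inst S p) k) = 2 * (real p / real (Suc p))"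
      proof -
        have kp: "real k > 0" using assms(2) by simp
        have "real k + real k * real p > 0" using kp by (intro add_pos_nonneg) auto
        then have nz: "real k + real k * real p \<noteq> 0" "1 + real p \<noteq> 0" by simp_all
        show ?thesis using inst_NF[OF assms(1) p1 assms(2)] O nz by (simp add: field_simps)
      qed
      then show ?thesis unfolding f_def using mem
        by (metis (no_types, lifting) SUP_upper)
    qed
    then show ?thesis
      by (intro LIMSEQ_le_const2[OF lim_ratio]) blast
  qed
  have "f \<longlonglongrightarrow> 2"
  proof (rule tendsto_sandwich[of "\<lambda>_. 2" f sequentially "\<lambda>N. ereal (2 + 1 / real N)"])
    show "eventually (\<lambda>N. 2 \<le> f N) sequentially" using low by simp
    show "eventually (\<lambda>N. f N \<le> ereal (2 + 1 / real N)) sequentially"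
      using eventually_ge_at_top[of "1::nat"] by (rule eventually_mono) (rule up)
    show "((\<lambda>_. 2) \<longlongrightarrow> (2::ereal)) sequentially" by simp
    have "(\<lambda>N. 2 + 1 / real N) \<longlonglongrightarrow> 2 + 0"
      by (intro tendsto_add tendsto_const lim_1_over_n)
    then show "(\<lambda>N. ereal (2 + 1 / real N)) \<longlonglongrightarrow> 2" by (simp add: lim_ereal)
  qed
  then have "limsup f = 2" by (intro lim_imp_Limsup) auto
  then show ?thesis unfolding f_def .
qed

end
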